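(* Let $\alpha$ be an $H$-coloring of $G$ and let $C$ be an $\alpha$-tight closed walk in $G$. Then every vertex of $C$ is frozen in $\alpha$.
   Context: All graphs are finite and undirected. $G$ is a connected loopless graph with at least one edge. $H$ is a connected graph with at least one edge, possibly with loops, having the monochromatic neighborhood property: for all $a,b\in V(H)$, $|N_H(a)\cap N_H(b)|\le 1$, where $N_H(a)=\{w: aw\in E(H)\}$. An $H$-coloring of $G$ is a map $\sigma:V(G)\to V(H)$ such that $uv\in E(G)$ implies $\sigma(u)\sigma(v)\in E(H)$. An $H$-recoloring sequence is a sequence $\sigma_0,\dots,\sigma_l$ of $H$-colorings of $G$ in which consecutive colorings differ in the color of exactly one vertex. An oriented edge is an ordered pair $(x,y)$ with $xy$ an edge; $(x,y)^{-1}=(y,x)$. A walk is a sequence of oriented edges in which each starts where the previous ends; it is closed if it ends where it starts. A walk is reduced if no two consecutive edges $e_ie_{i+1}$ satisfy $e_{i+1}=e_i^{-1}$. A nonempty closed walk $e_1\dots e_k$ is cyclically reduced if it is reduced and $e_k\neq e_1^{-1}$. For a walk $W=(x_0,x_1)\dots(x_{k-1},x_k)$ in $G$, $\alpha(W)=(\alpha(x_0),\alpha(x_1))\dots(\alpha(x_{k-1}),\alpha(x_k))$. A closed walk $C$ in $G$ is $\alpha$-tight if $\alpha(C)$ is cyclically reduced. A vertex $v$ is frozen in $\alpha$ if every $H$-recoloring sequence starting at $\alpha$ ends in a coloring $\beta$ with $\beta(v)=\alpha(v)$. *)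

theory Defs
  imports Main
begin

text \<open>A graph is a vertex set V together with a set E of oriented edges (ordered pairs);
  undirectedness is symmetry of E. Loops are pairs (x,x).\<close>

definition graph :: "'a set \<Rightarrow> ('a \<times> 'a) set \<Rightarrow> bool" where
  "graph V E \<longleftrightarrow> finite V \<and> E \<subseteq> V \<times> V \<and> sym E"

definition loopless :: "('a \<times> 'a) set \<Rightarrow> bool" where
  "loopless E \<longleftrightarrow> (\<forall>x. (x, x) \<notin> E)"

definition connected_graph :: "'a set \<Rightarrow> ('a \<times> 'a) set \<Rightarrow> bool" where
  "connected_graph V E \<longleftrightarrow> (\<forall>u\<in>V. \<forall>v\<in>V. (u, v) \<in> E\<^sup>*)"

definition nbhd :: "('a \<times> 'a) set \<Rightarrow> 'a \<Rightarrow> 'a set" where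
  "nbhd E a = {w. (a, w) \<in> E}"

definition mono_nbhd_prop :: "'a set \<Rightarrow> ('a \<times> 'a) set \<Rightarrow> bool" where
  "mono_nbhd_prop V E \<longleftrightarrow> (\<forall>a\<in>V. \<forall>b\<in>V. a \<noteq> b \<longrightarrow> card (nbhd E a \<inter> nbhd E b) \<le> 1)"

definition hom_coloring ::
  "'a set \<Rightarrow> ('a \<times> 'a) set \<Rightarrow> 'b set \<Rightarrow> ('b \<times> 'b) set \<Rightarrow> ('a \<Rightarrow> 'b) \<Rightarrow> bool" where
  "hom_coloring VG EG VH EH \<sigma> \<longleftrightarrow>
     (\<forall>v\<in>VG. \<sigma> v \<in> VH) \<and> (\<forall>u v. (u, v) \<in> EG \<longrightarrow> (\<sigma> u, \<sigma> v) \<in> EH)"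

definition differ_in_one :: "'a set \<Rightarrow> ('a \<Rightarrow> 'b) \<Rightarrow> ('a \<Rightarrow> 'b) \<Rightarrow> bool" where
  "differ_in_one VG \<sigma> \<tau> \<longleftrightarrow> card {v\<in>VG. \<sigma> v \<noteq> \<tau> v} = 1"

definition recoloring_seq ::
  "'a set \<Rightarrow> ('a \<times> 'a) set \<Rightarrow> 'b set \<Rightarrow> ('b \<times> 'b) set \<Rightarrow> ('a \<Rightarrow> 'b) list \<Rightarrow> bool" where
  "recoloring_seq VG EG VH EH ss \<longleftrightarrow> ss \<noteq> [] \<and>
     (\<forall>\<sigma>\<in>set ss. hom_coloring VG EG VH EH \<sigma>) \<and>
     (\<forall>i. Suc i < length ss \<longrightarrow> differ_in_one VG (ss ! i) (ss ! Suc i))"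

definition frozen ::
  "'a set \<Rightarrow> ('a \<times> 'a) set \<Rightarrow> 'b set \<Rightarrow> ('b \<times> 'b) set \<Rightarrow> ('a \<Rightarrow> 'b) \<Rightarrow> 'a \<Rightarrow> bool" where
  "frozen VG EG VH EH \<alpha> v \<longleftrightarrow>
     (\<forall>ss. recoloring_seq VG EG VH EH ss \<and> hd ss = \<alpha> \<longrightarrow> last ss v = \<alpha> v)"

definition inv_edge :: "'a \<times> 'a \<Rightarrow> 'a \<times> 'a" where
  "inv_edge e = (snd e, fst e)"

definition is_walk :: "('a \<times> 'a) set \<Rightarrow> ('a \<times> 'a) list \<Rightarrow> bool" where
  "is_walk E W \<longleftrightarrow> set W \<subseteq> E \<and> (\<forall>i. Suc i < length W \<longrightarrow> snd (W ! i) = fst (W ! Suc i))"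

definition closed_walk :: "('a \<times> 'a) set \<Rightarrow> ('a \<times> 'a) list \<Rightarrow> bool" where
  "closed_walk E W \<longleftrightarrow> is_walk E W \<and> (W \<noteq> [] \<longrightarrow> fst (hd W) = snd (last W))"

definition reduced :: "('a \<times> 'a) list \<Rightarrow> bool" where
  "reduced W \<longleftrightarrow> (\<forall>i. Suc i < length W \<longrightarrow> W ! Suc i \<noteq> inv_edge (W ! i))"

definition cyclically_reduced :: "('a \<times> 'a) set \<Rightarrow> ('a \<times> 'a) list \<Rightarrow> bool" where
  "cyclically_reduced E W \<longleftrightarrow> W \<noteq> [] \<and> closed_walk E W \<and> reduced W \<and> last W \<noteq> inv_edge (hd W)"

definition map_walk :: "('a \<Rightarrow> 'b) \<Rightarrow> ('a \<times> 'a) list \<Rightarrow> ('b \<times> 'b) list" where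
  "map_walk \<alpha> W = map (\<lambda>(x, y). (\<alpha> x, \<alpha> y)) W"

definition tight :: "('a \<times> 'a) set \<Rightarrow> ('b \<times> 'b) set \<Rightarrow> ('a \<Rightarrow> 'b) \<Rightarrow> ('a \<times> 'a) list \<Rightarrow> bool" where
  "tight EG EH \<alpha> C \<longleftrightarrow> closed_walk EG C \<and> cyclically_reduced EH (map_walk \<alpha> C)"

definition walk_vertices :: "('a \<times> 'a) list \<Rightarrow> 'a set" where
  "walk_vertices W = fst ` set W \<union> snd ` set W"

end

theory Submission
  imports Defs
begin

lemma two_le_card:
  assumes "finite A" "x \<in> A" "y \<in> A" "x \<noteq> y"
  shows "2 \<le> card A"
proof -
  have "card {x, y} \<le> card A" using assms by (intro card_mono) auto
  thus ?thesis using assms by simp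
qed

lemma find_index:
  assumes cw: "closed_walk E C" and v: "v \<in> walk_vertices C"
  shows "\<exists>i j. i < length C \<and> j < length C \<and> snd (C ! i) = v \<and> fst (C ! j) = v \<and>
           (j = Suc i \<or> (i = length C - 1 \<and> j = 0))"
proof -
  have ne: "C \<noteq> []" using v by (auto simp: walk_vertices_def)
  have wk: "\<And>i. Suc i < length C \<Longrightarrow> snd (C ! i) = fst (C ! Suc i)"
    using cw by (auto simp: closed_walk_def is_walk_def)
  have cl: "fst (C ! 0) = snd (C ! (length C - 1))"
    using cw ne by (auto simp: closed_walk_def hd_conv_nth last_conv_nth)
  from v consider (a) k where "k < length C" "fst (C ! k) = v"
    | (b) k where "k < length C" "snd (C ! k) = v"
    by (auto simp: walk_vertices_def in_set_conv_nth)
  thus ?thesis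
  proof cases
    case a
    show ?thesis
    proof (cases k)
      case 0
      thus ?thesis using a cl ne by (intro exI[of _ "length C - 1"] exI[of _ 0]) auto
    next
      case (Suc m)
      thus ?thesis using a wk[of m] by (intro exI[of _ m] exI[of _ k]) auto
    qed
  next
    case b
    show ?thesis
    proof (cases "Suc k < length C")
      case True
      thus ?thesis using b wk[of k] by (intro exI[of _ k] exI[of _ "Suc k"]) auto
    next
      case False
      hence "k = length C - 1" using b by auto
      thus ?thesis using b cl ne by (intro exI[of _ k] exI[of _ 0]) auto
    qed
  qed
qed

lemma walk_vertices_VG:
  assumes "graph VG EG" "closed_walk EG C" "v \<in> walk_vertices C"
  shows "v \<in> VG"
  using assms by (auto simp: graph_def closed_walk_def is_walk_def walk_vertices_def)

lemma step:
  assumes gG: "graph VG EG" and ll: "loopless EG" and gH: "graph VH EH"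
    and mn: "mono_nbhd_prop VH EH"
    and hs: "hom_coloring VG EG VH EH \<sigma>" and ht: "hom_coloring VG EG VH EH \<tau>"
    and d: "differ_in_one VG \<sigma> \<tau>"
    and cw: "closed_walk EG C" and cr: "cyclically_reduced EH (map_walk \<sigma> C)"
    and v: "v \<in> walk_vertices C"
  shows "\<tau> v = \<sigma> v"
proof (rule ccontr)
  assume neq: "\<tau> v \<noteq> \<sigma> v"
  have vV: "v \<in> VG" using walk_vertices_VG[OF gG cw v] .
  from d obtain z where z: "{x\<in>VG. \<sigma> x \<noteq> \<tau> x} = {z}"
    unfolding differ_in_one_def using card_1_singletonE by blast
  have "v \<in> {x\<in>VG. \<sigma> x \<noteq> \<tau> x}" using vV neq by simp
  hence vz: "v = z" using z by simp
  have agree: "\<tau> x = \<sigma> x" if "x \<in> VG" "x \<noteq> v" for x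
  proof (rule ccontr)
    assume "\<tau> x \<noteq> \<sigma> x"
    hence "x \<in> {x\<in>VG. \<sigma> x \<noteq> \<tau> x}" using that by simp
    thus False using z vz that by simp
  qed
  obtain i j where ij: "i < length C" "j < length C" "snd (C ! i) = v" "fst (C ! j) = v"
    "j = Suc i \<or> (i = length C - 1 \<and> j = 0)"
    using find_index[OF cw v] by blast
  define u where "u = fst (C ! i)"
  define w where "w = snd (C ! j)"
  have CiE: "C ! i \<in> EG" "C ! j \<in> EG" using cw ij by (auto simp: closed_walk_def is_walk_def)
  have e1: "(u, v) \<in> EG" using CiE ij u_def by (metis prod.collapse)
  have e2: "(v, w) \<in> EG" using CiE ij w_def by (metis prod.collapse)
  have e2': "(w, v) \<in> EG" using e2 gG by (auto simp: graph_def sym_def)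
  have uV: "u \<in> VG" and wV: "w \<in> VG" using e1 e2 gG by (auto simp: graph_def)
  have uv: "u \<noteq> v" and wv: "w \<noteq> v" using e1 e2 ll by (auto simp: loopless_def)
  have ne: "C \<noteq> []" using ij by auto
  have mi: "map_walk \<sigma> C ! i = (\<sigma> u, \<sigma> v)" using ij u_def
    by (simp add: map_walk_def case_prod_beta)
  have mj: "map_walk \<sigma> C ! j = (\<sigma> v, \<sigma> w)" using ij w_def
    by (simp add: map_walk_def case_prod_beta)
  have "map_walk \<sigma> C ! j \<noteq> inv_edge (map_walk \<sigma> C ! i)"
    using ij(5)
  proof
    assume "j = Suc i"
    moreover have "reduced (map_walk \<sigma> C)" using cr by (simp add: cyclically_reduced_def)
    ultimately show ?thesis using ij unfolding reduced_def by (simp add: map_walk_def)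
  next
    assume a: "i = length C - 1 \<and> j = 0"
    have "last (map_walk \<sigma> C) \<noteq> inv_edge (hd (map_walk \<sigma> C))"
      using cr by (auto simp: cyclically_reduced_def)
    moreover have "last (map_walk \<sigma> C) = map_walk \<sigma> C ! i"
      using a ne by (simp add: last_conv_nth map_walk_def)
    moreover have "hd (map_walk \<sigma> C) = map_walk \<sigma> C ! j"
      using a ne by (simp add: hd_conv_nth map_walk_def)
    ultimately show ?thesis by (auto simp: inv_edge_def)
  qed
  hence suw: "\<sigma> u \<noteq> \<sigma> w" using mi mj by (auto simp: inv_edge_def)
  have h1: "(\<sigma> u, \<sigma> v) \<in> EH" "(\<sigma> w, \<sigma> v) \<in> EH"
    using hs e1 e2' by (auto simp: hom_coloring_def)
  have h2: "(\<tau> u, \<tau> v) \<in> EH" "(\<tau> w, \<tau> v) \<in> EH"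
    using ht e1 e2' by (auto simp: hom_coloring_def)
  have tu: "\<tau> u = \<sigma> u" and tw: "\<tau> w = \<sigma> w" using agree uV wV uv wv by auto
  let ?A = "nbhd EH (\<sigma> u) \<inter> nbhd EH (\<sigma> w)"
  have fin: "finite ?A"
  proof -
    have "nbhd EH (\<sigma> u) \<subseteq> VH" using gH by (auto simp: graph_def nbhd_def)
    thus ?thesis using gH by (auto simp: graph_def intro: finite_subset)
  qed
  have in1: "\<sigma> v \<in> ?A" using h1 by (auto simp: nbhd_def)
  have in2: "\<tau> v \<in> ?A" using h2 tu tw by (auto simp: nbhd_def)
  have "2 \<le> card ?A" using two_le_card[OF fin in1 in2] neq by auto
  moreover have "\<sigma> u \<in> VH" "\<sigma> w \<in> VH" using hs uV wV by (auto simp: hom_coloring_def)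
  hence "card ?A \<le> 1" using mn suw by (auto simp: mono_nbhd_prop_def)
  ultimately show False by simp
qed

theorem mainTheorem4:
  fixes VG :: "'a set" and EG :: "('a \<times> 'a) set"
    and VH :: "'b set" and EH :: "('b \<times> 'b) set"
    and \<alpha> :: "'a \<Rightarrow> 'b" and C :: "('a \<times> 'a) list"
  assumes "graph VG EG" and "loopless EG" and "connected_graph VG EG" and "EG \<noteq> {}"
    and "graph VH EH" and "connected_graph VH EH" and "EH \<noteq> {}"
    and "mono_nbhd_prop VH EH"
    and "hom_coloring VG EG VH EH \<alpha>"
    and "tight EG EH \<alpha> C"
  shows "\<forall>v\<in>walk_vertices C. frozen VG EG VH EH \<alpha> v"
proof (intro ballI, unfold frozen_def, intro allI impI)
  fix v ss
  assume v: "v \<in> walk_vertices C" and a: "recoloring_seq VG EG VH EH ss \<and> hd ss = \<alpha>"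
  have cw: "closed_walk EG C" and cr: "cyclically_reduced EH (map_walk \<alpha> C)"
    using assms(10) by (auto simp: tight_def)
  have ne: "ss \<noteq> []" and hom: "\<And>k. k < length ss \<Longrightarrow> hom_coloring VG EG VH EH (ss ! k)"
    and dif: "\<And>k. Suc k < length ss \<Longrightarrow> differ_in_one VG (ss ! k) (ss ! Suc k)"
    using a by (auto simp: recoloring_seq_def)
  have "\<forall>x\<in>walk_vertices C. (ss ! k) x = \<alpha> x" if "k < length ss" for k
    using that
  proof (induction k)
    case 0
    then show ?case using a ne by (simp add: hd_conv_nth)
  next
    case (Suc k)
    hence IH: "\<forall>x\<in>walk_vertices C. (ss ! k) x = \<alpha> x" by simp
    have "map_walk (ss ! k) C = map_walk \<alpha> C"
      unfolding map_walk_def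
    proof (rule map_cong[OF refl])
      fix e assume "e \<in> set C"
      hence "fst e \<in> walk_vertices C" "snd e \<in> walk_vertices C" by (auto simp: walk_vertices_def)
      thus "(case e of (x, y) \<Rightarrow> ((ss ! k) x, (ss ! k) y)) = (case e of (x, y) \<Rightarrow> (\<alpha> x, \<alpha> y))"
        using IH by (auto simp: case_prod_beta)
    qed
    hence cr': "cyclically_reduced EH (map_walk (ss ! k) C)" using cr by simp
    show ?case
    proof
      fix x assume x: "x \<in> walk_vertices C"
      have "(ss ! Suc k) x = (ss ! k) x"
        using step[OF assms(1,2,5,8) hom[of k] hom[of "Suc k"] dif[of k] cw cr' x] Suc.prems by simp
      thus "(ss ! Suc k) x = \<alpha> x" using IH x by simp
    qed
  qed
  hence "\<forall>x\<in>walk_vertices C. (ss ! (length ss - 1)) x = \<alpha> x" using ne by simp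
  thus "last ss v = \<alpha> v" using v ne by (simp add: last_conv_nth)
qed

end
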